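(* Let $\{e_i\}_{i=1}^\infty$ be the canonical orthonormal basis of the real Hilbert space $\ell_2$, and let $a_i\neq0$ ($i=1,2,\dots$) be real numbers with $\sum_{i=1}^\infty a_i^2<\infty$. Define $x_k=a_k(e_1+e_{k+1})$ for $k=1,2,\dots$, and let $L$ be the right shift operator on $\ell_2$, $L(c_1,c_2,\dots)=(0,c_1,c_2,\dots)$. Then the family \[ \{e_i\}_{i=1}^\infty\cup\{2^{-i}L^ix_k\}_{i=0,\,k=1}^{\infty,\ \infty}\] is a frame for $\ell_2$ which is injective.
   Context: A family $\{y_k\}$ in $\ell_2$ is called injective if whenever a Hilbert–Schmidt self-adjoint operator $T$ on $\ell_2$ satisfies $\langle Ty_k,y_k\rangle=0$ for all $k$, then $T=0$. *)

theory Defs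
  imports "HOL-Analysis.Analysis"
begin

text \<open>The real Hilbert space l2, realised as square-summable real sequences
  indexed from 0 (so the paper's e_1 is index 0 here).\<close>

definition l2 :: "(nat \<Rightarrow> real) set" where
  "l2 = {x. summable (\<lambda>i. (x i)\<^sup>2)}"

definition ip :: "(nat \<Rightarrow> real) \<Rightarrow> (nat \<Rightarrow> real) \<Rightarrow> real" where
  "ip x y = (\<Sum>i. x i * y i)"

definition basis :: "nat \<Rightarrow> nat \<Rightarrow> real" where
  "basis i = (\<lambda>j. if j = i then 1 else 0)"

definition shift :: "(nat \<Rightarrow> real) \<Rightarrow> nat \<Rightarrow> real" where
  "shift c = (\<lambda>n. case n of 0 \<Rightarrow> 0 | Suc m \<Rightarrow> c m)"

definition is_frame :: "('j \<Rightarrow> (nat \<Rightarrow> real)) \<Rightarrow> bool" where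
  "is_frame y \<longleftrightarrow> (\<forall>j. y j \<in> l2) \<and>
     (\<exists>A B. 0 < A \<and> A \<le> B \<and>
        (\<forall>x\<in>l2. (\<lambda>j. (ip x (y j))\<^sup>2) summable_on UNIV \<and>
                 A * ip x x \<le> (\<Sum>\<^sub>\<infinity>j. (ip x (y j))\<^sup>2) \<and>
                 (\<Sum>\<^sub>\<infinity>j. (ip x (y j))\<^sup>2) \<le> B * ip x x))"

definition bounded_op_l2 :: "((nat \<Rightarrow> real) \<Rightarrow> (nat \<Rightarrow> real)) \<Rightarrow> bool" where
  "bounded_op_l2 T \<longleftrightarrow> (\<forall>x\<in>l2. T x \<in> l2) \<and>
     (\<forall>x\<in>l2. \<forall>y\<in>l2. T (\<lambda>i. x i + y i) = (\<lambda>i. T x i + T y i)) \<and>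
     (\<forall>x\<in>l2. \<forall>c. T (\<lambda>i. c * x i) = (\<lambda>i. c * T x i)) \<and>
     (\<exists>C. \<forall>x\<in>l2. ip (T x) (T x) \<le> C * ip x x)"

definition hilbert_schmidt :: "((nat \<Rightarrow> real) \<Rightarrow> (nat \<Rightarrow> real)) \<Rightarrow> bool" where
  "hilbert_schmidt T \<longleftrightarrow> bounded_op_l2 T \<and>
     summable (\<lambda>i. ip (T (basis i)) (T (basis i)))"

definition self_adjoint_l2 :: "((nat \<Rightarrow> real) \<Rightarrow> (nat \<Rightarrow> real)) \<Rightarrow> bool" where
  "self_adjoint_l2 T \<longleftrightarrow> (\<forall>x\<in>l2. \<forall>y\<in>l2. ip (T x) y = ip x (T y))"

definition injective_family :: "('j \<Rightarrow> (nat \<Rightarrow> real)) \<Rightarrow> bool" where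
  "injective_family y \<longleftrightarrow>
     (\<forall>T. hilbert_schmidt T \<and> self_adjoint_l2 T \<and> (\<forall>k. ip (T (y k)) (y k) = 0)
          \<longrightarrow> (\<forall>x\<in>l2. T x = (\<lambda>_. 0)))"

text \<open>x_k = a_k (e_1 + e_{k+1}); with 0-indexing k \<mapsto> k, e_1 \<mapsto> basis 0,
  e_{k+1} \<mapsto> basis (Suc k).\<close>
definition xvec :: "(nat \<Rightarrow> real) \<Rightarrow> nat \<Rightarrow> nat \<Rightarrow> real" where
  "xvec a k = (\<lambda>j. a k * (basis 0 j + basis (Suc k) j))"

definition fam :: "(nat \<Rightarrow> real) \<Rightarrow> nat + nat \<times> nat \<Rightarrow> nat \<Rightarrow> real" where
  "fam a s = (case s of Inl i \<Rightarrow> basis i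
                | Inr (i, k) \<Rightarrow> (\<lambda>j. (1 / 2 ^ i) * (shift ^^ i) (xvec a k) j))"

end

theory Submission
  imports Defs
begin

lemma ip_fin: "finite N \<Longrightarrow> (\<And>n. n \<notin> N \<Longrightarrow> y n = 0) \<Longrightarrow> ip x y = (\<Sum>n\<in>N. x n * y n)"
  unfolding ip_def by (rule suminf_finite) auto

lemma ip_fin_left: "finite N \<Longrightarrow> (\<And>n. n \<notin> N \<Longrightarrow> y n = 0) \<Longrightarrow> ip y x = (\<Sum>n\<in>N. y n * x n)"
  unfolding ip_def by (rule suminf_finite) auto

lemma l2_fin: "finite N \<Longrightarrow> (\<And>n. n \<notin> N \<Longrightarrow> y n = 0) \<Longrightarrow> y \<in> l2"
  unfolding l2_def by (auto intro!: summable_finite)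

lemma ip_basis: "ip x (basis n) = x n"
  by (subst ip_fin[of "{n}"]) (auto simp: basis_def)

lemma ip_basis_left: "ip (basis n) x = x n"
  by (subst ip_fin_left[of "{n}"]) (auto simp: basis_def)

lemma basis_l2: "basis n \<in> l2"
  by (rule l2_fin[of "{n}"]) (auto simp: basis_def)

lemma shift_pow: "(shift ^^ i) g j = (if j < i then 0 else g (j - i))"
proof (induction i arbitrary: j)
  case 0 then show ?case by simp
next
  case (Suc i) then show ?case by (cases j) (auto simp: shift_def)
qed

lemma fam_Inl: "fam a (Inl i) = basis i" by (simp add: fam_def)

lemma fam_Inr: "fam a (Inr (i,k)) = (\<lambda>n. (a k / 2^i) * (basis i n + basis (Suc (i+k)) n))"
  unfolding fam_def by (rule ext) (auto simp: shift_pow xvec_def basis_def)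

lemma inj_part:
  assumes a0: "\<forall>k. a k \<noteq> 0"
  shows "injective_family (fam a)"
  unfolding injective_family_def
proof (intro allI impI ballI)
  fix T x
  assume H: "hilbert_schmidt T \<and> self_adjoint_l2 T \<and> (\<forall>k. ip (T (fam a k)) (fam a k) = 0)"
  have lin1: "\<And>x y. x \<in> l2 \<Longrightarrow> y \<in> l2 \<Longrightarrow> T (\<lambda>i. x i + y i) = (\<lambda>i. T x i + T y i)"
   and lin2: "\<And>x c. x \<in> l2 \<Longrightarrow> T (\<lambda>i. c * x i) = (\<lambda>i. c * T x i)"
    using H unfolding hilbert_schmidt_def bounded_op_l2_def by auto
  have sa: "\<And>x y. x \<in> l2 \<Longrightarrow> y \<in> l2 \<Longrightarrow> ip (T x) y = ip x (T y)"
    using H unfolding self_adjoint_l2_def by auto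
  have z: "\<And>s. ip (T (fam a s)) (fam a s) = 0" using H by auto
  have diag: "T (basis i) i = 0" for i
    using z[of "Inl i"] by (simp add: fam_Inl ip_basis)
  have sym: "T (basis i) j = T (basis j) i" for i j
    using sa[OF basis_l2 basis_l2, of i j] by (simp add: ip_basis ip_basis_left)
  have off: "T (basis j) i = 0" if "i < j" for i j
  proof -
    define k where "k = j - i - 1"
    have j: "j = Suc (i + k)" using that k_def by simp
    define c where "c = a k / 2^i"
    have c0: "c \<noteq> 0" using a0 c_def by simp
    define g where "g = (\<lambda>n. basis i n + basis j n)"
    have gl2: "g \<in> l2" unfolding g_def by (rule l2_fin[of "{i,j}"]) (auto simp: basis_def)
    have f: "fam a (Inr (i,k)) = (\<lambda>n. c * g n)" using fam_Inr[of a i k] j c_def g_def by simp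
    have Tg: "T g = (\<lambda>n. T (basis i) n + T (basis j) n)"
      unfolding g_def by (rule lin1[OF basis_l2 basis_l2])
    have Tf: "T (fam a (Inr (i,k))) = (\<lambda>n. c * (T (basis i) n + T (basis j) n))"
      using lin2[OF gl2, of c] f Tg by simp
    have "ip (T (fam a (Inr (i,k)))) (fam a (Inr (i,k)))
        = (\<Sum>n\<in>{i,j}. T (fam a (Inr (i,k))) n * fam a (Inr (i,k)) n)"
      by (rule ip_fin) (auto simp: f g_def basis_def)
    also have "\<dots> = c * c * (T (basis i) i + T (basis j) i + T (basis i) j + T (basis j) j)"
    proof -
      have "fam a (Inr (i,k)) i = c" "fam a (Inr (i,k)) j = c"
        using that by (auto simp: f g_def basis_def)
      then show ?thesis using that by (simp only: Tf) (simp add: algebra_simps)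
    qed
    also have "\<dots> = c * c * (2 * T (basis j) i)" using diag[of i] diag[of j] sym[of i j] by simp
    finally show ?thesis using z[of "Inr (i,k)"] c0 by simp
  qed
  have M0: "T (basis j) i = 0" for i j
    using off[of i j] off[of j i] diag[of i] sym[of i j] by (cases "i < j"; cases "j < i") auto
  assume xl: "x \<in> l2"
  show "T x = (\<lambda>_. 0)"
  proof
    fix n
    have "T x n = ip (T x) (basis n)" by (simp add: ip_basis)
    also have "\<dots> = ip x (T (basis n))" by (rule sa[OF xl basis_l2])
    also have "\<dots> = 0" using M0 by (simp add: ip_def)
    finally show "T x n = 0" .
  qed
qed


lemma ip_Inr: "ip x (fam a (Inr (i,k))) = a k / 2^i * (x i + x (Suc (i+k)))"
proof -
  have "ip x (fam a (Inr (i,k))) = (\<Sum>n\<in>{i, Suc (i+k)}. x n * fam a (Inr (i,k)) n)"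
    by (rule ip_fin) (auto simp: fam_Inr basis_def)
  also have "\<dots> = a k / 2^i * (x i + x (Suc (i+k)))"
    by (simp add: fam_Inr basis_def algebra_simps add_divide_distrib)
  finally show ?thesis .
qed

lemma frame_part:
  assumes sa: "summable (\<lambda>k. (a k)\<^sup>2)"
  shows "is_frame (fam a)"
  unfolding is_frame_def
proof (intro conjI)
  show "\<forall>j. fam a j \<in> l2"
  proof
    fix s show "fam a s \<in> l2"
    proof (cases s)
      case (Inl i) then show ?thesis by (simp add: fam_Inl basis_l2)
    next
      case (Inr p) then obtain i k where p: "s = Inr (i,k)" by (cases p) auto
      show ?thesis unfolding p fam_Inr by (rule l2_fin[of "{i, Suc (i+k)}"]) (auto simp: basis_def)
    qed
  qed
  define S where "S = (\<Sum>k. (a k)\<^sup>2)"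
  have S0: "0 \<le> S" unfolding S_def by (intro suminf_nonneg sa) auto
  have Sb: "(\<Sum>k<N. (a k)\<^sup>2) \<le> S" for N
    unfolding S_def by (rule sum_le_suminf[OF sa]) auto
  have geo: "(\<Sum>i<N. (1/4::real)^i) \<le> 4/3" for N
  proof -
    have "(\<Sum>i<N. (1/4::real)^i) \<le> (\<Sum>i. (1/4::real)^i)"
      by (rule sum_le_suminf) auto
    also have "\<dots> = 4/3" by (subst suminf_geometric) auto
    finally show ?thesis .
  qed
  show "\<exists>A B. 0 < A \<and> A \<le> B \<and>
        (\<forall>x\<in>l2. (\<lambda>j. (ip x (fam a j))\<^sup>2) summable_on UNIV \<and>
                 A * ip x x \<le> (\<Sum>\<^sub>\<infinity>j. (ip x (fam a j))\<^sup>2) \<and>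
                 (\<Sum>\<^sub>\<infinity>j. (ip x (fam a j))\<^sup>2) \<le> B * ip x x)"
  proof (rule exI[of _ "1::real"], rule exI[of _ "1 + 6 * S"], intro conjI ballI)
    show "(0::real) < 1" by simp
    show "1 \<le> 1 + 6 * S" using S0 by simp
    fix x assume xl: "x \<in> l2"
    define g where "g = (\<lambda>j. (ip x (fam a j))\<^sup>2)"
    have gnn: "0 \<le> g j" for j unfolding g_def by simp
    have sx: "summable (\<lambda>i. (x i)\<^sup>2)" using xl unfolding l2_def by simp
    define Q where "Q = ip x x"
    have Qs: "Q = (\<Sum>i. (x i)\<^sup>2)" unfolding Q_def ip_def by (simp add: power2_eq_square)
    have Qb: "(\<Sum>i<N. (x i)\<^sup>2) \<le> Q" for N
      unfolding Qs by (rule sum_le_suminf[OF sx]) auto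
    have Q1: "(x n)\<^sup>2 \<le> Q" for n
    proof -
      have "(\<Sum>i\<in>{n}. (x i)\<^sup>2) \<le> Q" unfolding Qs by (rule sum_le_suminf[OF sx]) auto
      then show ?thesis by simp
    qed
    have Q0: "0 \<le> Q" using Q1[of 0] by (smt (verit) zero_le_power2)
    have gl: "g (Inl i) = (x i)\<^sup>2" for i unfolding g_def by (simp add: fam_Inl ip_basis)
    have four: "(2::real)^(i*2) = 4^i" for i
      by (subst mult.commute) (simp add: power_mult)
    have gr: "g (Inr (i,k)) \<le> (1/4)^i * (a k)\<^sup>2 * (4 * Q)" for i k
    proof -
      have "g (Inr (i,k)) = (1/4)^i * (a k)\<^sup>2 * (x i + x (Suc (i+k)))\<^sup>2"
        using four[of i] unfolding g_def ip_Inr by (simp add: power_mult_distrib power_divide power_mult[symmetric] power_one_over)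
      also have "(x i + x (Suc (i+k)))\<^sup>2 \<le> 4 * Q"
      proof -
        have "(x i + x (Suc (i+k)))\<^sup>2 \<le> 2 * (x i)\<^sup>2 + 2 * (x (Suc (i+k)))\<^sup>2"
          by (smt (verit) zero_le_power2 power2_diff power2_sum)
        then show ?thesis using Q1[of i] Q1[of "Suc (i+k)"] by simp
      qed
      then have "(1/4)^i * (a k)\<^sup>2 * (x i + x (Suc (i+k)))\<^sup>2 \<le> (1/4)^i * (a k)\<^sup>2 * (4 * Q)"
        by (intro mult_left_mono) auto
      finally show ?thesis .
    qed
    have finb: "sum g F \<le> (1 + 6 * S) * Q" if F: "finite F" for F
    proof -
      define h where "h = (\<lambda>s::nat + nat \<times> nat. case s of Inl i \<Rightarrow> i | Inr (i,k) \<Rightarrow> i + k)"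
      obtain N where N: "\<And>s. s \<in> F \<Longrightarrow> h s < N"
        using finite_nat_bounded[OF finite_imageI[OF F, of h]] by (auto simp: lessThan_def)
      define G where "G = Inl ` {..<N} \<union> Inr ` ({..<N} \<times> {..<N})"
      have FG: "F \<subseteq> G"
      proof
        fix s assume "s \<in> F"
        then have "h s < N" by (rule N)
        then show "s \<in> G" unfolding G_def h_def by (cases s) auto
      qed
      have "sum g F \<le> sum g G"
        by (rule sum_mono2) (use FG in \<open>auto simp: G_def gnn\<close>)
      also have "\<dots> = sum g (Inl ` {..<N}) + sum g (Inr ` ({..<N} \<times> {..<N}))"
        unfolding G_def by (rule sum.union_disjoint) auto
      also have "sum g (Inl ` {..<N}) = (\<Sum>i<N. (x i)\<^sup>2)"
        by (subst sum.reindex) (auto simp: gl)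
      also have "sum g (Inr ` ({..<N} \<times> {..<N})) = (\<Sum>p\<in>{..<N} \<times> {..<N}. g (Inr p))"
        by (subst sum.reindex) auto
      also have "\<dots> \<le> (\<Sum>p\<in>{..<N} \<times> {..<N}. (1/4)^(fst p) * (a (snd p))\<^sup>2 * (4 * Q))"
        by (rule sum_mono) (use gr in auto)
      also have "\<dots> = 4 * Q * ((\<Sum>i<N. (1/4::real)^i) * (\<Sum>k<N. (a k)\<^sup>2))"
        by (simp add: sum_product sum.cartesian_product algebra_simps sum_distrib_left split_beta)
      also have "\<dots> \<le> 4 * Q * (4/3 * S)"
        by (intro mult_left_mono mult_mono geo Sb) (auto simp: Q0 S0 intro: sum_nonneg)
      finally show ?thesis using Qb[of N] mult_nonneg_nonneg[OF Q0 S0] by (simp add: algebra_simps)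
    qed
    have gs: "g summable_on UNIV"
      by (rule nonneg_bdd_above_summable_on) (auto simp: gnn bdd_above_def intro!: exI[of _ "(1 + 6 * S) * Q"] finb)
    then show "(\<lambda>j. (ip x (fam a j))\<^sup>2) summable_on UNIV" unfolding g_def .
    have "infsum g UNIV \<le> (1 + 6 * S) * Q"
      by (rule infsum_le_finite_sums[OF gs]) (rule finb)
    then show "(\<Sum>\<^sub>\<infinity>j. (ip x (fam a j))\<^sup>2) \<le> (1 + 6 * S) * ip x x" unfolding g_def Q_def .
    have "Q \<le> infsum g UNIV"
      unfolding Qs
    proof (rule suminf_le_const[OF sx])
      fix N
      have "(\<Sum>i<N. (x i)\<^sup>2) = sum g (Inl ` {..<N})"
        by (subst sum.reindex) (auto simp: gl)
      also have "\<dots> \<le> infsum g UNIV"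
        by (rule finite_sum_le_infsum[OF gs]) (auto simp: gnn)
      finally show "(\<Sum>i<N. (x i)\<^sup>2) \<le> infsum g UNIV" .
    qed
    then show "1 * ip x x \<le> (\<Sum>\<^sub>\<infinity>j. (ip x (fam a j))\<^sup>2)" unfolding g_def Q_def by simp
  qed
qed

theorem mainTheorem14:
  fixes a :: "nat \<Rightarrow> real"
  assumes "\<forall>k. a k \<noteq> 0"
    and "summable (\<lambda>k. (a k)\<^sup>2)"
  shows "is_frame (fam a) \<and> injective_family (fam a)"
  using frame_part[OF assms(2)] inj_part[OF assms(1)] by simp

end
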